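(* Let $(\approx^n_1,\approx^n_2)$ be call-by-name coupled logical bisimilarity. (1) If $M\approx^n_1 N$ then $C[M]\approx^n_1 C[N]$ for every context $C$ such that $C[M],C[N]$ are closed. (2) If $E\approx^n_2 F$ then $\mathcal{E}[E]\approx^n_2\mathcal{E}[F]$ for every call-by-name evaluation context $\mathcal{E}$.
   Context: $\Lambda^\bullet$ is the set of closed $\lambda$-terms. Contexts are generated by $C::=x\mid[\cdot]\mid C\,C\mid\lambda x.C$, possibly with several holes numbered left to right; $C[\widetilde M]$ fills the $i$-th hole with $M_i$; $C[M]$ fills every hole with $M$. For $\mathcal{R}\subseteq\Lambda^\bullet\times\Lambda^\bullet$, $\mathcal{R}^\star=\{(C[\widetilde M],C[\widetilde N]) : C\text{ a context},\ M_i\,\mathcal{R}\,N_i\ \forall i,\ C[\widetilde M],C[\widetilde N]\in\Lambda^\bullet\}$. Call-by-name evaluation contexts: $\mathcal{E}::=[\cdot]\mid\mathcal{E}\,M$ with $M\in\Lambda^\bullet$. Call-by-name reduction on closed terms: $MN\longrightarrow M'N$ if $M\longrightarrow M'$, and $(\lambda x.P)N\longrightarrow P[N/x]$; $\Longrightarrow$ is its reflexive transitive closure. A coupled relation is a pair $(\mathcal{R}_1,\mathcal{R}_2)$ of relations on $\Lambda^\bullet$ with $\mathcal{R}_1\subseteq\mathcal{R}_2$. It is a (call-by-name) coupled logical bisimulation if whenever $M\,\mathcal{R}_2\,N$: (1) if $M\longrightarrow M'$ then there is $N'$ with $N\Longrightarrow N'$ and $M'\,\mathcal{R}_2\,N'$;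 (2) if $M=\lambda x.M'$ then $N\Longrightarrow\lambda x.N'$ for some $N'$ and for all $P,Q\in\Lambda^\bullet$ with $P\,\mathcal{R}_1^\star\,Q$, $M'[P/x]\,\mathcal{R}_2\,N'[Q/x]$; (3) the converses of (1),(2) with $M$ and $N$ exchanged. Coupled logical bisimilarity $(\approx^n_1,\approx^n_2)$ is the componentwise union of all such bisimulations. *)

theory Defs
  imports Main
begin

datatype tm = Var nat | App tm tm | Lam tm

fun bnd :: "nat \<Rightarrow> tm \<Rightarrow> bool" where
  "bnd k (Var i) = (i < k)"
| "bnd k (App s t) = (bnd k s \<and> bnd k t)"
| "bnd k (Lam t) = bnd (Suc k) t"

definition closed :: "tm \<Rightarrow> bool" where
  "closed t = bnd 0 t"

fun lift :: "nat \<Rightarrow> tm \<Rightarrow> tm" where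
  "lift k (Var i) = (if i < k then Var i else Var (Suc i))"
| "lift k (App s t) = App (lift k s) (lift k t)"
| "lift k (Lam t) = Lam (lift (Suc k) t)"

text \<open>subst t k s: replace index k in t by s (capture-avoiding, indices above k decremented)\<close>
fun subst :: "tm \<Rightarrow> nat \<Rightarrow> tm \<Rightarrow> tm" where
  "subst (Var i) k s = (if i < k then Var i else if i = k then s else Var (i - 1))"
| "subst (App t u) k s = App (subst t k s) (subst u k s)"
| "subst (Lam t) k s = Lam (subst t (Suc k) (lift 0 s))"

inductive cbn :: "tm \<Rightarrow> tm \<Rightarrow> bool" where
  beta: "cbn (App (Lam P) N) (subst P 0 N)"
| appL: "cbn M M' \<Longrightarrow> cbn (App M N) (App M' N)"

abbreviation cbn_star :: "tm \<Rightarrow> tm \<Rightarrow> bool" where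
  "cbn_star \<equiv> cbn\<^sup>*\<^sup>*"

datatype ctx = CVar nat | Hole | CApp ctx ctx | CLam ctx

fun nholes :: "ctx \<Rightarrow> nat" where
  "nholes (CVar i) = 0"
| "nholes Hole = 1"
| "nholes (CApp C D) = nholes C + nholes D"
| "nholes (CLam C) = nholes C"

text \<open>fill C Ms fills the i-th hole (left to right) with Ms!i (no shifting: closed terms are plugged)\<close>
fun fill :: "ctx \<Rightarrow> tm list \<Rightarrow> tm" where
  "fill (CVar i) Ms = Var i"
| "fill Hole Ms = hd Ms"
| "fill (CApp C D) Ms = App (fill C (take (nholes C) Ms)) (fill D (drop (nholes C) Ms))"
| "fill (CLam C) Ms = Lam (fill C Ms)"

definition fill_all :: "ctx \<Rightarrow> tm \<Rightarrow> tm" where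
  "fill_all C M = fill C (replicate (nholes C) M)"

definition ctx_closure :: "(tm \<times> tm) set \<Rightarrow> (tm \<times> tm) set" where
  "ctx_closure R = {(fill C Ms, fill C Ns) | C Ms Ns.
      length Ms = nholes C \<and> length Ns = nholes C \<and>
      (\<forall>i < nholes C. (Ms ! i, Ns ! i) \<in> R) \<and>
      closed (fill C Ms) \<and> closed (fill C Ns)}"

text \<open>An evaluation context is the list of closed arguments [M1,...,Mk]: E[T] = T M1 ... Mk\<close>
definition efill :: "tm list \<Rightarrow> tm \<Rightarrow> tm" where
  "efill Ms T = foldl App T Ms"

definition closed_rel :: "(tm \<times> tm) set \<Rightarrow> bool" where
  "closed_rel R \<longleftrightarrow> (\<forall>(M, N) \<in> R. closed M \<and> closed N)"

definition lb_progress :: "(tm \<times> tm) set \<Rightarrow> (tm \<times> tm) set \<Rightarrow> tm \<Rightarrow> tm \<Rightarrow> bool" where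
  "lb_progress R1 R2 M N \<longleftrightarrow>
     (\<forall>M'. cbn M M' \<longrightarrow> (\<exists>N'. cbn_star N N' \<and> (M', N') \<in> R2)) \<and>
     (\<forall>M'. M = Lam M' \<longrightarrow> (\<exists>N'. cbn_star N (Lam N') \<and>
         (\<forall>P Q. (P, Q) \<in> ctx_closure R1 \<longrightarrow> (subst M' 0 P, subst N' 0 Q) \<in> R2)))"

definition coupled_lb :: "(tm \<times> tm) set \<Rightarrow> (tm \<times> tm) set \<Rightarrow> bool" where
  "coupled_lb R1 R2 \<longleftrightarrow> closed_rel R1 \<and> closed_rel R2 \<and> R1 \<subseteq> R2 \<and>
     (\<forall>(M, N) \<in> R2. lb_progress R1 R2 M N \<and> lb_progress (R1\<inverse>) (R2\<inverse>) N M)"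

definition bisim1 :: "(tm \<times> tm) set" where
  "bisim1 = \<Union>{R1. \<exists>R2. coupled_lb R1 R2}"

definition bisim2 :: "(tm \<times> tm) set" where
  "bisim2 = \<Union>{R2. \<exists>R1. coupled_lb R1 R2}"

end

theory Submission
  imports Defs
begin

inductive ctxrel :: "(tm \<times> tm) set \<Rightarrow> tm \<Rightarrow> tm \<Rightarrow> bool" for R where
  cvar: "ctxrel R (Var i) (Var i)"
| crel: "(M, N) \<in> R \<Longrightarrow> ctxrel R M N"
| capp: "ctxrel R A B \<Longrightarrow> ctxrel R A' B' \<Longrightarrow> ctxrel R (App A A') (App B B')"
| clam: "ctxrel R A B \<Longrightarrow> ctxrel R (Lam A) (Lam B)"

definition FR :: "(tm \<times> tm) set \<Rightarrow> (tm \<times> tm) set" where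
  "FR R = {(M, N). ctxrel R M N \<and> closed M \<and> closed N}"

definition GR :: "(tm \<times> tm) set \<Rightarrow> (tm \<times> tm) set \<Rightarrow> (tm \<times> tm) set" where
  "GR R1 R2 = {(efill Ds X, efill Es Y) | Ds Es X Y. (X, Y) \<in> R2 \<union> FR R1 \<and>
      list_all2 (\<lambda>D E. (D, E) \<in> FR R1) Ds Es}"

inductive_cases cbnLam: "cbn (Lam A) Z"
inductive_cases cbnApp: "cbn (App A B) Z"

lemma bnd_mono: "bnd j M \<Longrightarrow> j \<le> k \<Longrightarrow> bnd k M"
  by (induction M arbitrary: j k) auto

lemma lift_bnd: "bnd k M \<Longrightarrow> lift k M = M"
  by (induction M arbitrary: k) auto

lemma lift_closed: "closed M \<Longrightarrow> lift 0 M = M"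
  by (simp add: closed_def lift_bnd)

lemma subst_bnd: "bnd k M \<Longrightarrow> subst M k P = M"
  by (induction M arbitrary: k P) auto

lemma bnd_subst: "bnd (Suc k) M \<Longrightarrow> closed P \<Longrightarrow> bnd k (subst M k P)"
proof (induction M arbitrary: k P)
  case (Var i)
  then show ?case using bnd_mono[of 0 P k] by (auto simp: closed_def)
next
  case (App M1 M2)
  then show ?case by auto
next
  case (Lam M)
  then show ?case by (auto simp: lift_closed)
qed

lemma closed_subst: "closed (Lam M) \<Longrightarrow> closed P \<Longrightarrow> closed (subst M 0 P)"
  using bnd_subst[of 0 M P] by (simp add: closed_def)

lemma ctxrel_subst:
  assumes "closed_rel R" "ctxrel R A B" "ctxrel R P Q" "closed P" "closed Q"
  shows "ctxrel R (subst A k P) (subst B k Q)"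
  using assms(2)
proof (induction arbitrary: k rule: ctxrel.induct)
  case (cvar i)
  then show ?case using assms by (auto intro: ctxrel.intros)
next
  case (crel M N)
  then have "closed M" "closed N" using assms(1) by (auto simp: closed_rel_def)
  then have "subst M k P = M" "subst N k Q = N"
    using subst_bnd bnd_mono by (auto simp: closed_def)
  then show ?case using crel by (auto intro: ctxrel.intros)
next
  case (capp A B A' B')
  then show ?case by (auto intro: ctxrel.intros)
next
  case (clam A B)
  then show ?case using assms by (auto simp: lift_closed intro: ctxrel.intros)
qed

lemma ctxrel_refl: "ctxrel R M M"
  by (induction M) (auto intro: ctxrel.intros)

lemma ctxrel_conv1: "ctxrel R A B \<Longrightarrow> ctxrel (R\<inverse>) B A"
  by (induction rule: ctxrel.induct) (auto intro: ctxrel.intros)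

lemma ctxrel_conv: "ctxrel (R\<inverse>) A B = ctxrel R B A"
  using ctxrel_conv1[of R B A] ctxrel_conv1[of "R\<inverse>" A B] by auto

lemma FR_conv: "FR (R\<inverse>) = (FR R)\<inverse>"
  by (auto simp: FR_def ctxrel_conv)

lemma GR_conv: "GR (R1\<inverse>) (R2\<inverse>) = (GR R1 R2)\<inverse>"
proof -
  have *: "list_all2 (\<lambda>D E. (D, E) \<in> (FR R1)\<inverse>) Ds Es = list_all2 (\<lambda>D E. (D, E) \<in> FR R1) Es Ds" for Ds Es
    by (metis (no_types, lifting) converse_iff list_all2_conv_all_nth)
  show ?thesis unfolding GR_def FR_conv using * by blast
qed

lemma cc_to_ctxrel:
  "length Ms = nholes C \<Longrightarrow> length Ns = nholes C \<Longrightarrow> \<forall>i<nholes C. (Ms!i, Ns!i) \<in> R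
   \<Longrightarrow> ctxrel R (fill C Ms) (fill C Ns)"
proof (induction C arbitrary: Ms Ns)
  case (CVar x)
  then show ?case by (auto intro: ctxrel.intros)
next
  case Hole
  then show ?case by (auto simp: length_Suc_conv intro: ctxrel.intros)
next
  case (CApp C1 C2)
  have a: "ctxrel R (fill C1 (take (nholes C1) Ms)) (fill C1 (take (nholes C1) Ns))"
    using CApp.prems by (intro CApp.IH(1)) auto
  have b: "ctxrel R (fill C2 (drop (nholes C1) Ms)) (fill C2 (drop (nholes C1) Ns))"
    using CApp.prems by (intro CApp.IH(2)) auto
  show ?case using a b by (auto intro: ctxrel.intros)
next
  case (CLam C)
  then show ?case by (auto intro: ctxrel.intros)
qed

lemma ctxrel_to_cc:
  "ctxrel R A B \<Longrightarrow> \<exists>C Ms Ns. A = fill C Ms \<and> B = fill C Ns \<and> length Ms = nholes C \<and>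
     length Ns = nholes C \<and> (\<forall>i<nholes C. (Ms!i, Ns!i) \<in> R)"
proof (induction rule: ctxrel.induct)
  case (cvar i)
  then show ?case by (intro exI[of _ "CVar i"] exI[of _ "[]"]) auto
next
  case (crel M N)
  then show ?case by (intro exI[of _ Hole] exI[of _ "[M]"] exI[of _ "[N]"]) auto
next
  case (capp A B A' B')
  then obtain C1 Ms1 Ns1 C2 Ms2 Ns2 where h: "A = fill C1 Ms1" "B = fill C1 Ns1"
    "length Ms1 = nholes C1" "length Ns1 = nholes C1" "\<forall>i<nholes C1. (Ms1!i, Ns1!i) \<in> R"
    "A' = fill C2 Ms2" "B' = fill C2 Ns2"
    "length Ms2 = nholes C2" "length Ns2 = nholes C2" "\<forall>i<nholes C2. (Ms2!i, Ns2!i) \<in> R"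
    by blast
  have "\<forall>i<nholes C1 + nholes C2. ((Ms1@Ms2)!i, (Ns1@Ns2)!i) \<in> R"
    using h by (auto simp: nth_append)
  then show ?case using h
    by (intro exI[of _ "CApp C1 C2"] exI[of _ "Ms1@Ms2"] exI[of _ "Ns1@Ns2"]) auto
next
  case (clam A B)
  then obtain C Ms Ns where "A = fill C Ms \<and> B = fill C Ns \<and> length Ms = nholes C \<and>
     length Ns = nholes C \<and> (\<forall>i<nholes C. (Ms!i, Ns!i) \<in> R)" by blast
  then show ?case by (intro exI[of _ "CLam C"]) auto
qed

lemma cc_FR: "(P, Q) \<in> ctx_closure R \<Longrightarrow> (P, Q) \<in> FR R"
  unfolding ctx_closure_def FR_def using cc_to_ctxrel by blast

lemma FR_cc: "(P, Q) \<in> FR R \<Longrightarrow> (P, Q) \<in> ctx_closure R"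
proof -
  assume h: "(P, Q) \<in> FR R"
  then have c: "closed P" "closed Q" "ctxrel R P Q" by (auto simp: FR_def)
  from ctxrel_to_cc[OF c(3)] obtain C Ms Ns where "P = fill C Ms" "Q = fill C Ns"
    "length Ms = nholes C" "length Ns = nholes C" "\<forall>i<nholes C. (Ms!i, Ns!i) \<in> R" by blast
  then show ?thesis using c unfolding ctx_closure_def by blast
qed

lemma ctxrel_FR: "ctxrel (FR R) A B \<Longrightarrow> ctxrel R A B"
proof (induction rule: ctxrel.induct)
  case (crel M N)
  then show ?case by (simp add: FR_def)
qed (rule ctxrel.intros; assumption)+

lemma cc_FR_FR: "(P, Q) \<in> ctx_closure (FR R) \<Longrightarrow> (P, Q) \<in> FR R"
proof -
  assume "(P, Q) \<in> ctx_closure (FR R)"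
  then have h: "(P, Q) \<in> FR (FR R)" using cc_FR[of P Q "FR R"] by blast
  then have "ctxrel (FR R) P Q" "closed P" "closed Q" unfolding FR_def by blast+
  then show ?thesis using ctxrel_FR[of R P Q] unfolding FR_def by blast
qed

lemma efill_Nil[simp]: "efill [] X = X" by (simp add: efill_def)
lemma efill_Cons: "efill (D#Ds) X = efill Ds (App X D)" by (simp add: efill_def)
lemma efill_snoc: "efill (Ds@[D]) X = App (efill Ds X) D" by (simp add: efill_def)

lemma efill_Lam: "efill Ds X = Lam M \<Longrightarrow> Ds = []"
  by (cases Ds rule: rev_cases) (auto simp: efill_snoc)

lemma cbn_efill: "cbn X X' \<Longrightarrow> cbn (efill Ds X) (efill Ds X')"
  by (induction Ds arbitrary: X X') (auto simp: efill_Cons intro: cbn.appL)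

lemma cbn_star_efill: "cbn_star X X' \<Longrightarrow> cbn_star (efill Ds X) (efill Ds X')"
  by (induction rule: rtranclp_induct) (auto intro: rtranclp.rtrancl_into_rtrancl cbn_efill)

lemma cbn_efill_inv:
  "cbn (efill Ds X) Z \<Longrightarrow> (\<exists>X'. cbn X X' \<and> Z = efill Ds X') \<or>
     (\<exists>M' D Ds'. Ds = D#Ds' \<and> X = Lam M' \<and> Z = efill Ds' (subst M' 0 D))"
proof (induction Ds arbitrary: Z rule: rev_induct)
  case Nil
  then show ?case by auto
next
  case (snoc D Ds)
  from snoc.prems have "cbn (App (efill Ds X) D) Z" by (simp add: efill_snoc)
  then show ?case
  proof (cases rule: cbn.cases)
    case beta
    then obtain P where P: "efill Ds X = Lam P" "Z = subst P 0 D" by auto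
    then have "Ds = []" using efill_Lam by blast
    then show ?thesis using P by auto
  next
    case appL
    then obtain M' where appL: "Z = App M' D" "cbn (efill Ds X) M'" by auto
    define A' where "A' = M'"
    note appL = appL[folded A'_def]
    from snoc.IH[OF appL(2)] show ?thesis
    proof
      assume "\<exists>X'. cbn X X' \<and> A' = efill Ds X'"
      then show ?thesis using appL by (auto simp: efill_snoc)
    next
      assume "\<exists>M' D' Ds'. Ds = D'#Ds' \<and> X = Lam M' \<and> A' = efill Ds' (subst M' 0 D')"
      then show ?thesis using appL by (auto simp: efill_snoc)
    qed
  qed
qed

lemma closed_efill: "closed X \<Longrightarrow> \<forall>D\<in>set Ds. closed D \<Longrightarrow> closed (efill Ds X)"
  by (induction Ds arbitrary: X) (auto simp: efill_Cons closed_def)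

lemma GR_intro: "(X, Y) \<in> R2 \<union> FR R1 \<Longrightarrow> list_all2 (\<lambda>D E. (D, E) \<in> FR R1) Ds Es
   \<Longrightarrow> (efill Ds X, efill Es Y) \<in> GR R1 R2"
  unfolding GR_def by blast

lemma FR_subst: "closed_rel R1 \<Longrightarrow> ctxrel R1 A B \<Longrightarrow> closed (Lam A) \<Longrightarrow> closed (Lam B)
  \<Longrightarrow> (P, Q) \<in> FR R1 \<Longrightarrow> (subst A 0 P, subst B 0 Q) \<in> FR R1"
  unfolding FR_def using ctxrel_subst closed_subst by auto

locale fwd =
  fixes R1 R2
  assumes c1: "closed_rel R1" and c2: "closed_rel R2" and sub: "R1 \<subseteq> R2"
    and prog: "\<forall>(M, N) \<in> R2. lb_progress R1 R2 M N"
begin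

lemma fwd_R2:
  assumes "(X, Y) \<in> R2" "list_all2 (\<lambda>D E. (D, E) \<in> FR R1) Ds Es"
  shows "lb_progress (FR R1) (GR R1 R2) (efill Ds X) (efill Es Y)"
proof (cases Ds)
  case Nil
  then have E: "Es = []" using assms(2) by auto
  have p: "lb_progress R1 R2 X Y" using prog assms(1) by auto
  show ?thesis unfolding lb_progress_def Nil E efill_Nil
  proof (intro conjI allI impI)
    fix M' assume "cbn X M'"
    then obtain N' where "cbn_star Y N'" "(M', N') \<in> R2" using p by (auto simp: lb_progress_def)
    then show "\<exists>N'. cbn_star Y N' \<and> (M', N') \<in> GR R1 R2"
      using GR_intro[of M' N' R2 R1 "[]" "[]"] by auto
  next
    fix M' assume "X = Lam M'"
    then obtain N' where N': "cbn_star Y (Lam N')"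
      "\<forall>P Q. (P, Q) \<in> ctx_closure R1 \<longrightarrow> (subst M' 0 P, subst N' 0 Q) \<in> R2"
      using p by (auto simp: lb_progress_def)
    show "\<exists>N'. cbn_star Y (Lam N') \<and> (\<forall>P Q. (P, Q) \<in> ctx_closure (FR R1) \<longrightarrow>
        (subst M' 0 P, subst N' 0 Q) \<in> GR R1 R2)"
    proof (intro exI conjI allI impI)
      show "cbn_star Y (Lam N')" by fact
      fix P Q assume "(P, Q) \<in> ctx_closure (FR R1)"
      then have "(P, Q) \<in> ctx_closure R1" using cc_FR_FR FR_cc by blast
      then show "(subst M' 0 P, subst N' 0 Q) \<in> GR R1 R2"
        using N'(2) GR_intro[of _ _ R2 R1 "[]" "[]"] by auto
    qed
  qed
next
  case (Cons D Ds')
  then obtain E Es' where E: "Es = E#Es'" "(D, E) \<in> FR R1"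
    "list_all2 (\<lambda>D E. (D, E) \<in> FR R1) Ds' Es'" using assms(2) by (cases Es) auto
  have p: "lb_progress R1 R2 X Y" using prog assms(1) by auto
  show ?thesis unfolding lb_progress_def
  proof (intro conjI allI impI)
    fix Z assume "cbn (efill Ds X) Z"
    from cbn_efill_inv[OF this] show "\<exists>N'. cbn_star (efill Es Y) N' \<and> (Z, N') \<in> GR R1 R2"
    proof
      assume "\<exists>X'. cbn X X' \<and> Z = efill Ds X'"
      then obtain X' where X': "cbn X X'" "Z = efill Ds X'" by blast
      then obtain Y' where "cbn_star Y Y'" "(X', Y') \<in> R2" using p by (auto simp: lb_progress_def)
      then show ?thesis using X' cbn_star_efill GR_intro assms(2) by blast
    next
      assume "\<exists>M' D' Ds''. Ds = D'#Ds'' \<and> X = Lam M' \<and> Z = efill Ds'' (subst M' 0 D')"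
      then obtain M' where M': "X = Lam M'" "Z = efill Ds' (subst M' 0 D)" using Cons by auto
      then obtain N' where N': "cbn_star Y (Lam N')"
        "\<forall>P Q. (P, Q) \<in> ctx_closure R1 \<longrightarrow> (subst M' 0 P, subst N' 0 Q) \<in> R2"
        using p by (auto simp: lb_progress_def)
      have "(subst M' 0 D, subst N' 0 E) \<in> R2" using N'(2) FR_cc E(2) by blast
      moreover have "cbn_star (efill Es Y) (efill Es' (subst N' 0 E))"
      proof -
        have "cbn_star (efill Es Y) (efill Es (Lam N'))" using cbn_star_efill N'(1) by blast
        moreover have "cbn (efill Es (Lam N')) (efill Es' (subst N' 0 E))"
          using E(1) cbn_efill[OF cbn.beta] by (simp add: efill_Cons)
        ultimately show ?thesis by auto
      qed
      ultimately show ?thesis using M' GR_intro E(3) by blast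
    qed
  next
    fix M' assume "efill Ds X = Lam M'"
    then show "\<exists>N'. cbn_star (efill Es Y) (Lam N') \<and> (\<forall>P Q. (P, Q) \<in> ctx_closure (FR R1) \<longrightarrow>
        (subst M' 0 P, subst N' 0 Q) \<in> GR R1 R2)"
      using efill_Lam Cons by blast
  qed
qed

lemma fwd_R1:
  assumes "ctxrel R1 X Y"
  shows "closed X \<Longrightarrow> closed Y \<Longrightarrow> list_all2 (\<lambda>D E. (D, E) \<in> FR R1) Ds Es
    \<Longrightarrow> lb_progress (FR R1) (GR R1 R2) (efill Ds X) (efill Es Y)"
  using assms
proof (induction arbitrary: Ds Es rule: ctxrel.induct)
  case (cvar i)
  then show ?case by (simp add: closed_def)
next
  case (crel M N)
  then show ?case using fwd_R2 sub by blast
next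
  case (capp A B A' B')
  have "(A', B') \<in> FR R1" using capp by (auto simp: FR_def closed_def)
  then have "list_all2 (\<lambda>D E. (D, E) \<in> FR R1) (A'#Ds) (B'#Es)" using capp by auto
  moreover have "closed A" "closed B" using capp by (auto simp: closed_def)
  ultimately have "lb_progress (FR R1) (GR R1 R2) (efill (A'#Ds) A) (efill (B'#Es) B)"
    using capp.IH(1) by blast
  then show ?case by (simp add: efill_Cons)
next
  case (clam A B)
  show ?case
  proof (cases Ds)
    case Nil
    then have E: "Es = []" using clam by auto
    show ?thesis unfolding lb_progress_def Nil E efill_Nil
    proof (intro conjI allI impI)
      fix M' assume "cbn (Lam A) M'" then show "\<exists>N'. cbn_star (Lam B) N' \<and> (M', N') \<in> GR R1 R2"
        by (auto elim: cbnLam)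
    next
      fix M' assume M': "Lam A = Lam M'"
      show "\<exists>N'. cbn_star (Lam B) (Lam N') \<and> (\<forall>P Q. (P, Q) \<in> ctx_closure (FR R1) \<longrightarrow>
        (subst M' 0 P, subst N' 0 Q) \<in> GR R1 R2)"
      proof (intro exI conjI allI impI)
        show "cbn_star (Lam B) (Lam B)" by simp
        fix P Q assume "(P, Q) \<in> ctx_closure (FR R1)"
        then have "(P, Q) \<in> FR R1" using cc_FR_FR by blast
        then have "(subst A 0 P, subst B 0 Q) \<in> FR R1" using FR_subst c1 clam by blast
        then show "(subst M' 0 P, subst B 0 Q) \<in> GR R1 R2"
          using M' GR_intro[of _ _ R2 R1 "[]" "[]"] by auto
      qed
    qed
  next
    case (Cons D Ds')
    then obtain E Es' where E: "Es = E#Es'" "(D, E) \<in> FR R1"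
      "list_all2 (\<lambda>D E. (D, E) \<in> FR R1) Ds' Es'" using clam by (cases Es) auto
    show ?thesis unfolding lb_progress_def
    proof (intro conjI allI impI)
      fix Z assume "cbn (efill Ds (Lam A)) Z"
      from cbn_efill_inv[OF this] have Z: "Z = efill Ds' (subst A 0 D)"
        using Cons by (auto elim: cbnLam)
      have "(subst A 0 D, subst B 0 E) \<in> FR R1" using FR_subst c1 clam E(2) by blast
      moreover have "cbn (efill Es (Lam B)) (efill Es' (subst B 0 E))"
        using E(1) cbn_efill[OF cbn.beta] by (simp add: efill_Cons)
      ultimately show "\<exists>N'. cbn_star (efill Es (Lam B)) N' \<and> (Z, N') \<in> GR R1 R2"
        using Z GR_intro E(3) by blast
    next
      fix M' assume "efill Ds (Lam A) = Lam M'"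
      then show "\<exists>N'. cbn_star (efill Es (Lam B)) (Lam N') \<and> (\<forall>P Q. (P, Q) \<in> ctx_closure (FR R1) \<longrightarrow>
          (subst M' 0 P, subst N' 0 Q) \<in> GR R1 R2)"
        using efill_Lam Cons by blast
    qed
  qed
qed

lemma fwd_GR: "\<forall>(M, N) \<in> GR R1 R2. lb_progress (FR R1) (GR R1 R2) M N"
proof clarify
  fix M N assume "(M, N) \<in> GR R1 R2"
  then obtain Ds Es X Y where h: "M = efill Ds X" "N = efill Es Y" "(X, Y) \<in> R2 \<union> FR R1"
    "list_all2 (\<lambda>D E. (D, E) \<in> FR R1) Ds Es" unfolding GR_def by blast
  show "lb_progress (FR R1) (GR R1 R2) M N"
    using h(3) fwd_R1[OF _ _ _ h(4)] fwd_R2[OF _ h(4)] unfolding h(1,2) FR_def by blast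
qed

end

lemma closed_rel_conv: "closed_rel R \<Longrightarrow> closed_rel (R\<inverse>)"
  by (auto simp: closed_rel_def)

lemma coupled_FR_GR:
  assumes "coupled_lb R1 R2"
  shows "coupled_lb (FR R1) (GR R1 R2)"
proof -
  have c: "closed_rel R1" "closed_rel R2" "R1 \<subseteq> R2"
    "\<forall>(M, N) \<in> R2. lb_progress R1 R2 M N"
    "\<forall>(M, N) \<in> R2. lb_progress (R1\<inverse>) (R2\<inverse>) N M"
    using assms by (auto simp: coupled_lb_def)
  interpret f1: fwd R1 R2 using c by (unfold_locales) auto
  have "fwd (R1\<inverse>) (R2\<inverse>)" using c by (unfold_locales) (auto simp: closed_rel_conv)
  then interpret f2: fwd "R1\<inverse>" "R2\<inverse>" .
  have cl: "closed_rel (GR R1 R2)"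
    unfolding closed_rel_def GR_def
  proof clarify
    fix Ds Es X Y
    assume h: "(X, Y) \<in> R2 \<union> FR R1" "list_all2 (\<lambda>D E. (D, E) \<in> FR R1) Ds Es"
    have "closed X \<and> closed Y" using h(1) c(2) by (auto simp: closed_rel_def FR_def)
    moreover have "\<forall>D\<in>set Ds. closed D" "\<forall>E\<in>set Es. closed E"
      using h(2) by (auto simp: FR_def list_all2_conv_all_nth in_set_conv_nth)
    ultimately show "closed (efill Ds X) \<and> closed (efill Es Y)" using closed_efill by blast
  qed
  have sub: "FR R1 \<subseteq> GR R1 R2" using GR_intro[of _ _ R2 R1 "[]" "[]"] by auto
  have bw: "lb_progress ((FR R1)\<inverse>) ((GR R1 R2)\<inverse>) N M" if "(M, N) \<in> GR R1 R2" for M N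
    using f2.fwd_GR that unfolding FR_conv GR_conv by auto
  show ?thesis unfolding coupled_lb_def
    using cl sub bw f1.fwd_GR by (auto simp: closed_rel_def FR_def)
qed

lemma fill_all_ctxrel: "(M, N) \<in> R \<Longrightarrow> ctxrel R (fill C (replicate k M)) (fill C (replicate k' N))"
  if "k = nholes C" "k' = nholes C"
  using that
proof (induction C arbitrary: k k')
  case (CApp C1 C2)
  then show ?case by (auto simp: take_replicate drop_replicate intro: ctxrel.intros)
qed (auto intro: ctxrel.intros)

theorem mainTheorem7:
  shows "(\<forall>M N C. (M, N) \<in> bisim1 \<longrightarrow> closed (fill_all C M) \<longrightarrow> closed (fill_all C N)
            \<longrightarrow> (fill_all C M, fill_all C N) \<in> bisim1)
       \<and> (\<forall>E F Ms. (E, F) \<in> bisim2 \<longrightarrow> (\<forall>M \<in> set Ms. closed M)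
            \<longrightarrow> (efill Ms E, efill Ms F) \<in> bisim2)"
proof (intro conjI allI impI)
  fix M N C
  assume "(M, N) \<in> bisim1" "closed (fill_all C M)" "closed (fill_all C N)"
  then obtain R1 R2 where R: "coupled_lb R1 R2" "(M, N) \<in> R1" by (auto simp: bisim1_def)
  have "(fill_all C M, fill_all C N) \<in> FR R1"
    using fill_all_ctxrel[OF refl refl R(2)] \<open>closed (fill_all C M)\<close> \<open>closed (fill_all C N)\<close>
    by (auto simp: FR_def fill_all_def)
  then show "(fill_all C M, fill_all C N) \<in> bisim1"
    using coupled_FR_GR[OF R(1)] unfolding bisim1_def by blast
next
  fix E F Ms
  assume "(E, F) \<in> bisim2" "\<forall>M \<in> set Ms. closed M"
  then obtain R1 R2 where R: "coupled_lb R1 R2" "(E, F) \<in> R2" by (auto simp: bisim2_def)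
  have "list_all2 (\<lambda>D E. (D, E) \<in> FR R1) Ms Ms"
    using \<open>\<forall>M \<in> set Ms. closed M\<close> by (auto simp: list_all2_conv_all_nth FR_def ctxrel_refl)
  then have "(efill Ms E, efill Ms F) \<in> GR R1 R2" using GR_intro R(2) by blast
  then show "(efill Ms E, efill Ms F) \<in> bisim2"
    using coupled_FR_GR[OF R(1)] unfolding bisim2_def by blast
qed

end
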